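(* Let $M$ be a total deterministic 2-copy tree-to-word transducer with output alphabet $B$ whose axiom is $q_1(x_1)q_2(x_1)$ for states $q_1,q_2$. Then $M$ is balanced (i.e. $\mathcal{L}(M)=\{\varepsilon\}$) if and only if both of the following hold: (1) $\mathcal{L}(q_1)\subseteq A^*$ and $\overline{\mathcal{L}(q_2)}\subseteq A^*$; (2) $q_1$ and $\bar q_2$ are equivalent, i.e. $[\![q_1]\!](t)=[\![\bar q_2]\!](t)$ for all $t\in\mathcal{T}_\Sigma$.
   Context: Let $A$ be a finite alphabet of opening brackets, $\bar A=\{\bar a\mid a\in A\}$ a disjoint copy of closing brackets, and $B=A\cup\bar A$. Extend $\bar{\cdot}$ to an involution on $B^*$ by $\bar\varepsilon=\varepsilon$, $\bar{\bar a}=a$, $\overline{\alpha\beta}=\bar\beta\,\bar\alpha$, and to languages elementwise. The reduction relation on $B^*$ is $\alpha a\bar a\beta\to\alpha\beta$ for $a\in A$ (only $a\bar a$ cancels, not $\bar a a$); $\rho(\alpha)$ denotes the unique irreducible normal form. Let $\Sigma$ be a finite ranked input alphabet and $\mathcal{T}_\Sigma$ the trees over $\Sigma$. A total deterministic 2-copy tree-to-word transducer has a finite set $Q$ of states and, for every $q\in Q$ and $f\in\Sigma$ of rank $m$, exactly one rule $q(f(x_1,\dots,x_m))\to u_0q_1'(x_{\sigma(1)})u_1\cdots q_n'(x_{\sigma(n)})u_n$ with $q_i'\in Q$, $u_i\in B^*$, $n\le m$, $\sigma$ injective. State semantics: $[\![q]\!](f(t_1,\dots,t_m))=\rho(u_0[\![q_1']\!](t_{\sigma(1)})u_1\cdots[\![q_n']\!](t_{\sigma(n)})u_n)$,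 and $\mathcal{L}(q)=\{[\![q]\!](t)\mid t\in\mathcal{T}_\Sigma\}$. With axiom $q_1(x_1)q_2(x_1)$, $[\![M]\!](t)=\rho([\![q_1]\!](t)[\![q_2]\!](t))$ and $\mathcal{L}(M)=\{[\![M]\!](t)\mid t\in\mathcal T_\Sigma\}$. For a state $q$, $\bar q$ denotes the inverse transduction, obtained from a copy of the rules reachable from $q$ by applying the involution to each right-hand side, so that $[\![\bar q]\!](t)=\overline{[\![q]\!](t)}$ for all $t$. *)

theory Defs
  imports Main
begin

datatype 'a br = Op 'a | Cl 'a   (* Op a = opening bracket a, Cl a = closing bracket \<bar>a *)

fun bar_sym :: "'a br \<Rightarrow> 'a br" where
  "bar_sym (Op a) = Cl a"
| "bar_sym (Cl a) = Op a"

definition bar :: "'a br list \<Rightarrow> 'a br list" where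
  "bar w = rev (map bar_sym w)"

definition red_step :: "('a br list \<times> 'a br list) set" where
  "red_step = {(\<alpha> @ [Op a, Cl a] @ \<beta>, \<alpha> @ \<beta>) | \<alpha> a \<beta>. True}"

definition irreducible :: "'a br list \<Rightarrow> bool" where
  "irreducible w \<longleftrightarrow> (\<nexists>v. (w, v) \<in> red_step)"

definition rho :: "'a br list \<Rightarrow> 'a br list" where
  "rho w = (THE v. (w, v) \<in> red_step\<^sup>* \<and> irreducible v)"

datatype 'f tree = Node 'f "'f tree list"

inductive_set trees :: "('f \<Rightarrow> nat) \<Rightarrow> 'f tree set" for rank where
  "length ts = rank f \<Longrightarrow> (\<forall>t\<in>set ts. t \<in> trees rank) \<Longrightarrow> Node f ts \<in> trees rank"

text \<open>A rule  q(f(x_1..x_m)) -> u_0 q_1(x_{s(1)}) u_1 ... q_n(x_{s(n)}) u_n  is represented as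
  (u_0, [(q_1, s(1)-1, u_1), ..., (q_n, s(n)-1, u_n)]) (child indices 0-based).
  A total deterministic transducer is a function assigning one rule to every (q, f).\<close>

type_synonym ('q, 'a) rhs = "'a br list \<times> ('q \<times> nat \<times> 'a br list) list"

definition wf_rules :: "('f \<Rightarrow> nat) \<Rightarrow> ('q \<Rightarrow> 'f \<Rightarrow> ('q, 'a) rhs) \<Rightarrow> bool" where
  "wf_rules rank R \<longleftrightarrow> (\<forall>q f. distinct (map (\<lambda>(_, i, _). i) (snd (R q f)))
                         \<and> (\<forall>(_, i, _) \<in> set (snd (R q f)). i < rank f))"

function (sequential) sem :: "('q \<Rightarrow> 'f \<Rightarrow> ('q, 'a) rhs) \<Rightarrow> 'q \<Rightarrow> 'f tree \<Rightarrow> 'a br list" where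
  "sem R q (Node f ts) =
     rho (fst (R q f) @
          concat (map (\<lambda>(q', i, u). (if i < length ts then sem R q' (ts ! i) else []) @ u)
                      (snd (R q f))))"
  by pat_completeness auto
termination
  apply (relation "measure (\<lambda>(_, _, t). size t)")
   apply simp
  apply (simp add: less_Suc_eq_le)
  apply (rule size_list_estimation'[OF nth_mem])
   apply assumption
  apply simp
  done

text \<open>Inverse transducer: apply the involution to each right-hand side.
  u_0 q_1 u_1 ... q_n u_n  becomes  bar u_n, q_n, bar u_{n-1}, ..., q_1, bar u_0
  (with all states read in the inverse transducer).\<close>

definition inv_rhs :: "('q, 'a) rhs \<Rightarrow> ('q, 'a) rhs" where
  "inv_rhs r = (let us = fst r # map (\<lambda>(_, _, u). u) (snd r) in
     (bar (last us),
      rev (map2 (\<lambda>(q, i, _) u. (q, i, bar u)) (snd r) (butlast us))))"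

definition inv_rules :: "('q \<Rightarrow> 'f \<Rightarrow> ('q, 'a) rhs) \<Rightarrow> 'q \<Rightarrow> 'f \<Rightarrow> ('q, 'a) rhs" where
  "inv_rules R q f = inv_rhs (R q f)"

definition lang :: "('f \<Rightarrow> nat) \<Rightarrow> ('q \<Rightarrow> 'f \<Rightarrow> ('q, 'a) rhs) \<Rightarrow> 'q \<Rightarrow> 'a br list set" where
  "lang rank R q = sem R q ` trees rank"

definition sem2 :: "('q \<Rightarrow> 'f \<Rightarrow> ('q, 'a) rhs) \<Rightarrow> 'q \<Rightarrow> 'q \<Rightarrow> 'f tree \<Rightarrow> 'a br list" where
  "sem2 R q1 q2 t = rho (sem R q1 t @ sem R q2 t)"

definition lang2 :: "('f \<Rightarrow> nat) \<Rightarrow> ('q \<Rightarrow> 'f \<Rightarrow> ('q, 'a) rhs) \<Rightarrow> 'q \<Rightarrow> 'q \<Rightarrow> 'a br list set" where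
  "lang2 rank R q1 q2 = sem2 R q1 q2 ` trees rank"

definition opening_words :: "'a br list set" where
  "opening_words = {w. set w \<subseteq> range Op}"

end

theory Submission
  imports Defs
begin

fun irr :: "'a br list \<Rightarrow> bool" where
  "irr [] = True"
| "irr [x] = True"
| "irr (x # y # w) = ((\<nexists>a. x = Op a \<and> y = Cl a) \<and> irr (y # w))"

lemma irr_iff: "irr w \<longleftrightarrow> \<not>(\<exists>\<alpha> a \<beta>. w = \<alpha> @ Op a # Cl a # \<beta>)"
proof (induction w rule: irr.induct)
  case 1 then show ?case by simp
next
  case (2 x) then show ?case by (simp add: Cons_eq_append_conv)
next
  case (3 x y w)
  show ?case
  proof
    assume h: "irr (x # y # w)"
    show "\<not>(\<exists>\<alpha> a \<beta>. x # y # w = \<alpha> @ Op a # Cl a # \<beta>)"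
    proof
      assume "\<exists>\<alpha> a \<beta>. x # y # w = \<alpha> @ Op a # Cl a # \<beta>"
      then obtain \<alpha> a \<beta> where e: "x # y # w = \<alpha> @ Op a # Cl a # \<beta>" by blast
      show False
      proof (cases \<alpha>)
        case Nil then show ?thesis using e h by auto
      next
        case (Cons z \<alpha>')
        then have yw: "y # w = \<alpha>' @ Op a # Cl a # \<beta>" using e by simp
        have "irr (y # w)" using h by simp
        with "3" have "\<not>(\<exists>\<alpha> a \<beta>. y # w = \<alpha> @ Op a # Cl a # \<beta>)" by blast
        then show ?thesis using yw by blast
      qed
    qed
  next
    assume h: "\<not>(\<exists>\<alpha> a \<beta>. x # y # w = \<alpha> @ Op a # Cl a # \<beta>)"
    have "\<nexists>a. x = Op a \<and> y = Cl a"
    proof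
      assume "\<exists>a. x = Op a \<and> y = Cl a"
      then obtain a where "x = Op a" "y = Cl a" by blast
      then have "x # y # w = [] @ Op a # Cl a # w" by simp
      then show False using h by blast
    qed
    moreover have "irr (y # w)"
    proof (rule ccontr)
      assume "\<not> irr (y # w)"
      then obtain \<alpha> a \<beta> where "y # w = \<alpha> @ Op a # Cl a # \<beta>" using 3 by blast
      then have "x # y # w = (x # \<alpha>) @ Op a # Cl a # \<beta>" by simp
      then show False using h by blast
    qed
    ultimately show "irr (x # y # w)" by simp
  qed
qed

lemma irreducible_irr: "irreducible w \<longleftrightarrow> irr w"
  unfolding irreducible_def red_step_def irr_iff by auto

lemma irr_snoc: "irr (xs @ [x]) \<longleftrightarrow> irr xs \<and> \<not>(\<exists>a. xs \<noteq> [] \<and> last xs = Op a \<and> x = Cl a)"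
  by (induction xs rule: irr.induct) auto

fun push :: "'a br \<Rightarrow> 'a br list \<Rightarrow> 'a br list" where
  "push (Cl a) (Op b # s) = (if a = b then s else Cl a # Op b # s)"
| "push x s = x # s"

fun stk :: "'a br list \<Rightarrow> 'a br list \<Rightarrow> 'a br list" where
  "stk s [] = s"
| "stk s (x # w) = stk (push x s) w"

lemma stk_append: "stk s (u @ v) = stk (stk s u) v"
  by (induction u arbitrary: s) auto

lemma red_stk: "(w, v) \<in> red_step \<Longrightarrow> stk s w = stk s v"
  unfolding red_step_def by (auto simp: stk_append)

lemma reds_stk: "(w, v) \<in> red_step\<^sup>* \<Longrightarrow> stk s w = stk s v"
  by (induction rule: rtrancl_induct) (auto dest: red_stk[where s=s])

lemma push_red: "(rev s @ x # w, rev (push x s) @ w) \<in> red_step\<^sup>*"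
proof (cases "\<exists>a s'. x = Cl a \<and> s = Op a # s'")
  case True
  then obtain a s' where e: "x = Cl a" "s = Op a # s'" by blast
  have "(rev s' @ [Op a, Cl a] @ w, rev s' @ w) \<in> red_step"
    unfolding red_step_def by blast
  then show ?thesis using e by auto
next
  case False
  then have "push x s = x # s"
    by (cases x; cases s; auto elim: push.elims split: if_splits; metis push.simps br.exhaust)
  then show ?thesis by simp
qed

lemma stk_red: "(rev s @ w, rev (stk s w)) \<in> red_step\<^sup>*"
proof (induction w arbitrary: s)
  case Nil then show ?case by simp
next
  case (Cons x w)
  have "(rev (push x s) @ w, rev (stk (push x s) w)) \<in> red_step\<^sup>*" by (rule Cons)
  with push_red[of s x w] show ?case by simp
qed


lemma push_cases: "(\<exists>a s'. x = Cl a \<and> s = Op a # s' \<and> push x s = s') \<or>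
   (push x s = x # s \<and> \<not>(\<exists>a s'. x = Cl a \<and> s = Op a # s'))"
  by (induction x s rule: push.induct) auto

lemma push_irr: "irr (rev s) \<Longrightarrow> irr (rev (push x s))"
proof -
  assume h: "irr (rev s)"
  from push_cases[of x s] show ?thesis
  proof
    assume "\<exists>a s'. x = Cl a \<and> s = Op a # s' \<and> push x s = s'"
    then obtain a s' where "s = Op a # s'" "push x s = s'" by blast
    then show ?thesis using h by (simp add: irr_snoc)
  next
    assume a: "push x s = x # s \<and> \<not>(\<exists>a s'. x = Cl a \<and> s = Op a # s')"
    have "\<not>(\<exists>a. rev s \<noteq> [] \<and> last (rev s) = Op a \<and> x = Cl a)"
    proof
      assume "\<exists>a. rev s \<noteq> [] \<and> last (rev s) = Op a \<and> x = Cl a"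
      then obtain a where "s \<noteq> []" "hd s = Op a" "x = Cl a" by (auto simp: last_rev)
      then show False using a by (cases s) auto
    qed
    then show ?thesis using a h by (simp add: irr_snoc)
  qed
qed

lemma stk_irr: "irr (rev s) \<Longrightarrow> irr (rev (stk s w))"
  by (induction w arbitrary: s) (auto intro: push_irr)

lemma irr_appendD: "irr (u @ v) \<Longrightarrow> irr v"
  unfolding irr_iff by (metis append.assoc)

lemma stk_irr_id: "irr (rev s @ w) \<Longrightarrow> stk s w = rev w @ s"
proof (induction w arbitrary: s)
  case Nil then show ?case by simp
next
  case (Cons x w)
  have "push x s = x # s"
  proof (cases "\<exists>a s'. x = Cl a \<and> s = Op a # s'")
    case True
    then obtain a s' where e: "x = Cl a" "s = Op a # s'" by blast
    have "rev s @ x # w = rev s' @ Op a # Cl a # w" using e by simp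
    then show ?thesis using Cons.prems unfolding irr_iff by blast
  next
    case False
    then show ?thesis
      by (cases x; cases s; auto elim: push.elims split: if_splits; metis push.simps br.exhaust)
  qed
  moreover have "stk (x # s) w = rev w @ x # s"
    using Cons.prems by (intro Cons.IH) simp
  ultimately show ?case by simp
qed

lemma rho_char: "(w, v) \<in> red_step\<^sup>* \<Longrightarrow> irreducible v \<Longrightarrow> rho w = v"
  unfolding rho_def
proof (rule the_equality)
  fix v' assume "(w, v) \<in> red_step\<^sup>*" "irreducible v" "(w, v') \<in> red_step\<^sup>* \<and> irreducible v'"
  then have "stk [] v = stk [] v'" by (metis reds_stk)
  moreover have "stk [] v = rev v" using \<open>irreducible v\<close>
    by (simp add: stk_irr_id irreducible_irr)
  moreover have "stk [] v' = rev v'" using \<open>(w, v') \<in> red_step\<^sup>* \<and> irreducible v'\<close>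
    by (simp add: stk_irr_id irreducible_irr)
  ultimately show "v' = v" by simp
qed simp

lemma rho_stk: "rho w = rev (stk [] w)"
  using stk_red[of "[]" w] stk_irr[of "[]" w] by (intro rho_char) (auto simp: irreducible_irr)

lemma rho_irr: "irreducible (rho w)"
  using stk_irr[of "[]" w] by (simp add: rho_stk irreducible_irr)

lemma rho_red: "(w, rho w) \<in> red_step\<^sup>*"
  using stk_red[of "[]" w] by (simp add: rho_stk)

lemma stk_rho: "stk s (rho w) = stk s w"
  using rho_red reds_stk by metis

lemma rho_ctx: "rho (x @ rho y @ z) = rho (x @ y @ z)"
  unfolding rho_stk[of "x @ rho y @ z"] rho_stk[of "x @ y @ z"] stk_append stk_rho ..

lemma rho_idem: "irreducible w \<Longrightarrow> rho w = w"
  by (rule rho_char) auto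

lemma bar_bar[simp]: "bar (bar w) = w"
proof -
  have "bar_sym (bar_sym x) = x" for x :: "'a br" by (cases x) auto
  then show ?thesis unfolding bar_def by (simp add: rev_map comp_def)
qed

lemma bar_append[simp]: "bar (u @ v) = bar v @ bar u"
  unfolding bar_def by simp

lemma bar_Cons: "bar (x # u) = bar u @ [bar_sym x]"
  unfolding bar_def by simp

lemma bar_Nil[simp]: "bar [] = []"
  unfolding bar_def by simp

lemma bar_red: "(w, v) \<in> red_step \<Longrightarrow> (bar w, bar v) \<in> red_step"
proof -
  assume "(w, v) \<in> red_step"
  then obtain \<alpha> a \<beta> where "w = \<alpha> @ [Op a, Cl a] @ \<beta>" "v = \<alpha> @ \<beta>"
    unfolding red_step_def by blast
  then have "bar w = bar \<beta> @ [Op a, Cl a] @ bar \<alpha>" "bar v = bar \<beta> @ bar \<alpha>"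
    by (auto simp: bar_def)
  then show ?thesis unfolding red_step_def by blast
qed

lemma bar_reds: "(w, v) \<in> red_step\<^sup>* \<Longrightarrow> (bar w, bar v) \<in> red_step\<^sup>*"
  by (induction rule: rtrancl_induct) (auto intro: rtrancl_into_rtrancl bar_red)

lemma bar_irreducible: "irreducible w \<Longrightarrow> irreducible (bar w)"
  unfolding irreducible_def using bar_red by (metis bar_bar)

lemma rho_bar: "rho (bar w) = bar (rho w)"
  by (intro rho_char bar_reds rho_red bar_irreducible rho_irr)


lemma inv_concat:
  "bar (last (u0 # map (\<lambda>(_, _, u). u) rs)) @
     concat (map (\<lambda>(q', i, u). bar (W q' i) @ u)
       (rev (map2 (\<lambda>(q, i, _) u. (q, i, bar u)) rs (butlast (u0 # map (\<lambda>(_, _, u). u) rs)))))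
   = bar (u0 @ concat (map (\<lambda>(q', i, u). W q' i @ u) rs))"
proof (induction rs arbitrary: u0)
  case Nil then show ?case by simp
next
  case (Cons r rs)
  obtain q i u where r: "r = (q, i, u)" by (cases r) auto
  show ?case using Cons.IH[of u] by (simp add: r)
qed

lemma sem_inv: "sem (inv_rules R) q t = bar (sem R q t)"
proof (induction t arbitrary: q)
  case (Node f ts)
  define W where "W = (\<lambda>q' i. if i < length ts then sem R q' (ts ! i) else [])"
  have W': "(\<lambda>(q', i, u). (if i < length ts then sem (inv_rules R) q' (ts ! i) else []) @ u)
      = (\<lambda>(q', i, u). bar (W q' i) @ u)"
    using Node.IH by (auto simp: W_def fun_eq_iff)
  have W2: "(\<lambda>(q', i, u). (if i < length ts then sem R q' (ts ! i) else []) @ u)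
      = (\<lambda>(q', i, u). W q' i @ u)" by (simp add: W_def)
  have "sem (inv_rules R) q (Node f ts) =
     rho (bar (fst (R q f) @ concat (map (\<lambda>(q', i, u). W q' i @ u) (snd (R q f)))))"
    by (simp only: sem.simps W' inv_concat[symmetric] inv_rules_def inv_rhs_def Let_def fst_conv snd_conv)
  also have "\<dots> = bar (sem R q (Node f ts))"
    by (simp only: rho_bar sem.simps W2)
  finally show ?case .
qed

lemma P: "irr (x # w) \<Longrightarrow> stk (x # s) w \<noteq> []"
proof (induction w arbitrary: x s)
  case Nil then show ?case by simp
next
  case (Cons y w)
  have "push y (x # s) = y # x # s"
    using push_cases[of y "x # s"] Cons.prems by auto
  moreover have "irr (y # w)" using Cons.prems by simp
  ultimately show ?case using Cons.IH[of y "x # s"] by simp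
qed

lemma Q: "irr v \<Longrightarrow> stk s v = [] \<Longrightarrow> set s \<subseteq> range Op \<and> v = map bar_sym s"
proof (induction v arbitrary: s)
  case Nil then show ?case by simp
next
  case (Cons x v)
  from push_cases[of x s] show ?case
  proof
    assume "\<exists>a s'. x = Cl a \<and> s = Op a # s' \<and> push x s = s'"
    then obtain a s' where e: "x = Cl a" "s = Op a # s'" "push x s = s'" by blast
    have "irr v" using Cons.prems(1) by (cases v) auto
    then have "set s' \<subseteq> range Op \<and> v = map bar_sym s'"
      using Cons.prems(2) e by (intro Cons.IH) auto
    then show ?thesis using e by auto
  next
    assume "push x s = x # s \<and> \<not>(\<exists>a s'. x = Cl a \<and> s = Op a # s')"
    then have "stk (x # s) v = []" using Cons.prems(2) by simp
    then show ?thesis using P[OF Cons.prems(1)] by simp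
  qed
qed


lemma rho_Op_bar: "set u \<subseteq> range Op \<Longrightarrow> rho (u @ bar u) = []"
proof (induction u)
  case Nil then show ?case by (simp add: rho_stk)
next
  case (Cons x u)
  then obtain a where x: "x = Op a" by auto
  have "rho ((x # u) @ bar (x # u)) = rho ([Op a] @ (u @ bar u) @ [Cl a])"
    by (simp add: x bar_Cons)
  also have "\<dots> = rho ([Op a] @ rho (u @ bar u) @ [Cl a])" by (simp only: rho_ctx)
  also have "\<dots> = []" using Cons by (simp add: rho_stk)
  finally show ?case .
qed

lemma pair:
  assumes "irreducible u" "irreducible v"
  shows "rho (u @ v) = [] \<longleftrightarrow> (u \<in> opening_words \<and> bar v \<in> opening_words \<and> u = bar v)"
proof
  assume h: "rho (u @ v) = []"
  have "stk [] u = rev u" using assms(1) stk_irr_id[of "[]" u] by (simp add: irreducible_irr)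
  then have "stk (rev u) v = []" using h by (simp add: rho_stk stk_append)
  then have "set (rev u) \<subseteq> range Op \<and> v = map bar_sym (rev u)"
    using Q assms(2) by (metis irreducible_irr)
  then have "set u \<subseteq> range Op" "v = bar u" by (auto simp: bar_def rev_map)
  then show "u \<in> opening_words \<and> bar v \<in> opening_words \<and> u = bar v"
    by (simp add: opening_words_def)
next
  assume "u \<in> opening_words \<and> bar v \<in> opening_words \<and> u = bar v"
  then have "set u \<subseteq> range Op" "v = bar u" by (auto simp: opening_words_def)
  then show "rho (u @ v) = []" using rho_Op_bar by blast
qed

lemma sem_irr: "irreducible (sem R q t)"
  by (cases t) (simp only: sem.simps rho_irr)

theorem proposition1:
  fixes rank :: "'f::finite \<Rightarrow> nat"
    and R :: "'q::finite \<Rightarrow> 'f \<Rightarrow> ('q, 'a::finite) rhs"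
    and q1 q2 :: 'q
  assumes wf: "wf_rules rank R"
    and nonempty: "trees rank \<noteq> {}"
  shows "lang2 rank R q1 q2 = {[]} \<longleftrightarrow>
         ((lang rank R q1 \<subseteq> opening_words \<and> bar ` lang rank R q2 \<subseteq> opening_words)
          \<and> (\<forall>t\<in>trees rank. sem R q1 t = sem (inv_rules R) q2 t))"
proof -
  have "lang2 rank R q1 q2 = {[]} \<longleftrightarrow> (\<forall>t\<in>trees rank. sem2 R q1 q2 t = [])"
    using nonempty unfolding lang2_def by auto
  also have "\<dots> \<longleftrightarrow> (\<forall>t\<in>trees rank. sem R q1 t \<in> opening_words \<and>
      bar (sem R q2 t) \<in> opening_words \<and> sem R q1 t = bar (sem R q2 t))"
    by (simp add: sem2_def pair[OF sem_irr sem_irr])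
  also have "\<dots> \<longleftrightarrow> ((lang rank R q1 \<subseteq> opening_words \<and> bar ` lang rank R q2 \<subseteq> opening_words)
          \<and> (\<forall>t\<in>trees rank. sem R q1 t = sem (inv_rules R) q2 t))"
    unfolding lang_def sem_inv image_subset_iff image_image by auto
  finally show ?thesis .
qed

end
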